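(* Let $G=(V,E)$ be a directed graph whose edges are given on the external tape of a RATM-BIO as adjacency lists. Then the worst-case external access trace complexity of the DFS-Random Access algorithm (described in the context) executed on a RATM-BIO is $O(|V||E|)$.
   Context: A RATM-BIO (random access Turing machine with blocking IO) has a main memory tape with its address tape and an external memory tape with its address tape; a main head with random access on the main tape (jumping in one step to the cell whose index is on the main address tape when entering a random access state) and an external head that moves only one cell at a time on the external tape. Transitions are main memory computation transitions (main head moves, external head halts), external memory access transitions (external head moves one step, main head halts), and read/write transitions: on entering a read (write) state an external address is written, the main head halts and the external head moves step by step to the designated external cell; when reached, the content of that cell replaces (is replaced by) the content of the main memory cell under the main head, and main memory computation resumes. The external access trace complexity is the total number of moves of the external head. Semi-external setting: main memory has size $O(|V|)$; it holds an array $free[\cdot]$ indexed by vertices and a stack. DFS-Random Access algorithm: set $free[u]=1$ for all vertices $u$; for each vertex $u$: push $u$ on an empty stack; while the stack is nonempty, pop $v$; if $free[v]=1$, set $free[v]=0$ and, for each neighbor $w$ of $v$ (its adjacency list read from the external tape, in whatever order vertices are processed), if $free[w]=1$ push $w$. *)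

theory Defs
  imports Main
begin

text \<open>
  A directed graph G = (V,E) with V = {0..<n} is given by its adjacency
  lists adj :: nat list list (length adj = n; adj ! v lists the out-neighbours of v).
  The external tape stores the adjacency lists consecutively, list of vertex 0 first,
  one edge (neighbour) per cell; cell indices start at 0.  The list of v occupies the
  cells ext_start adj v, ..., ext_start adj v + length (adj ! v) - 1.
\<close>

definition num_edges :: "nat list list \<Rightarrow> nat" where
  "num_edges adj = sum_list (map length adj)"

definition ext_start :: "nat list list \<Rightarrow> nat \<Rightarrow> nat" where
  "ext_start adj v = sum_list (map length (take v adj))"

text \<open>External cells read (one read transition each) when scanning the list of v.\<close>
definition ext_cells :: "nat list list \<Rightarrow> nat \<Rightarrow> nat list" where
  "ext_cells adj v = map (\<lambda>i. ext_start adj v + i) [0..<length (adj ! v)]"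

definition free_count :: "bool list \<Rightarrow> nat" where
  "free_count fr = card {i. i < length fr \<and> fr ! i}"

lemma free_count_update_less:
  assumes "v < length fr" "fr ! v"
  shows "free_count (fr[v := False]) < free_count fr"
proof -
  have "{i. i < length (fr[v := False]) \<and> fr[v := False] ! i}
        \<subset> {i. i < length fr \<and> fr ! i}"
    using assms by (auto simp: nth_list_update split: if_splits)
  then show ?thesis unfolding free_count_def
    by (intro psubset_card_mono) auto
qed

text \<open>
  The inner loop of DFS-Random Access: state = array free[.] (as bool list) and stack.
\<close>
function dfs_loop :: "nat list list \<Rightarrow> bool list \<Rightarrow> nat list \<Rightarrow> bool list \<times> nat list" where
  "dfs_loop adj fr [] = (fr, [])"
| "dfs_loop adj fr (v # st) =
     (if v < length fr \<and> fr ! v then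
        (let fr1 = fr[v := False];
             ws = filter (\<lambda>w. w < length fr1 \<and> fr1 ! w) (adj ! v);
             (fr2, tr) = dfs_loop adj fr1 (rev ws @ st)
         in (fr2, ext_cells adj v @ tr))
      else dfs_loop adj fr st)"
  by pat_completeness auto
termination
  by (relation "measures [\<lambda>(adj, fr, st). free_count fr, \<lambda>(adj, fr, st). length st]")
     (auto simp: free_count_update_less)

definition dfs_trace :: "nat list list \<Rightarrow> nat list" where
  "dfs_trace adj =
     snd (foldl (\<lambda>(fr, tr) u. let (fr', tr') = dfs_loop adj fr [u] in (fr', tr @ tr'))
                (replicate (length adj) True, []) [0..<length adj])"

text \<open>Number of moves of the external head (starting at cell 0) visiting the given
  cells in order; the head moves one cell per step.\<close>
fun head_moves :: "nat \<Rightarrow> nat list \<Rightarrow> nat" where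
  "head_moves h [] = 0"
| "head_moves h (a # as) = (if h \<le> a then a - h else h - a) + head_moves a as"

definition ext_access_trace_complexity :: "nat list list \<Rightarrow> nat" where
  "ext_access_trace_complexity adj = head_moves 0 (dfs_trace adj)"

end

theory Submission
  imports Defs
begin

lemma hm_append:
  "head_moves h (xs @ ys) = head_moves h xs + head_moves (if xs = [] then h else last xs) ys"
  by (induction xs arbitrary: h) auto

lemma hm_upt:
  "head_moves h [a..<b] \<le> (if h \<le> a then a - h else h - a) + (b - a)"
proof (induction "b - a" arbitrary: h a)
  case 0
  then show ?case by simp
next
  case (Suc x)
  then have ab: "a < b" by simp
  have "head_moves a [Suc a..<b] \<le> (if a \<le> Suc a then Suc a - a else a - Suc a) + (b - Suc a)"
    using Suc.hyps(1)[of "Suc a" a] Suc.hyps(2) by simp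
  then show ?case using ab by (simp add: upt_conv_Cons)
qed

lemma ext_cells_upt: "ext_cells adj v = [ext_start adj v..<ext_start adj v + length (adj ! v)]"
  unfolding ext_cells_def by (rule nth_equalityI) auto

lemma ext_end:
  assumes "v < length adj"
  shows "ext_start adj v + length (adj ! v) \<le> num_edges adj"
proof -
  have "ext_start adj v + length (adj ! v) = sum_list (map length (take (Suc v) adj))"
    using assms by (simp add: ext_start_def take_Suc_conv_app_nth)
  also have "\<dots> \<le> sum_list (map length (take (Suc v) adj)) + sum_list (map length (drop (Suc v) adj))"
    by simp
  also have "\<dots> = num_edges adj"
    unfolding num_edges_def by (metis append_take_drop_id map_append sum_list_append)
  finally show ?thesis .
qed

lemma hm_block:
  assumes "v < length adj" "h \<le> num_edges adj"
  shows "head_moves h (ext_cells adj v) \<le> 2 * num_edges adj"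
proof -
  let ?s = "ext_start adj v" and ?k = "length (adj ! v)"
  have e: "?s + ?k \<le> num_edges adj" using ext_end[OF assms(1)] .
  have "head_moves h (ext_cells adj v) \<le> (if h \<le> ?s then ?s - h else h - ?s) + (?s + ?k - ?s)"
    unfolding ext_cells_upt by (rule hm_upt)
  then show ?thesis using e assms(2) by (auto split: if_splits)
qed

lemma hm_concat:
  assumes "\<forall>v\<in>set vs. v < length adj" "h \<le> num_edges adj"
  shows "head_moves h (concat (map (ext_cells adj) vs)) \<le> length vs * (2 * num_edges adj)"
  using assms
proof (induction vs arbitrary: h)
  case Nil
  then show ?case by simp
next
  case (Cons v vs)
  let ?b = "ext_cells adj v"
  let ?h' = "if ?b = [] then h else last ?b"
  have v: "v < length adj" using Cons.prems by simp
  have h': "?h' \<le> num_edges adj"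
  proof (cases "?b = []")
    case False
    then have "0 < length (adj ! v)" by (simp add: ext_cells_def)
    moreover have "last ?b = ext_start adj v + length (adj ! v) - 1"
      using False by (simp add: ext_cells_upt)
    ultimately show ?thesis using False ext_end[OF v] by simp
  qed (use Cons.prems in simp)
  have "head_moves h (concat (map (ext_cells adj) (v # vs))) = head_moves h ?b + head_moves ?h' (concat (map (ext_cells adj) vs))"
    by (simp add: hm_append)
  also have "\<dots> \<le> 2 * num_edges adj + length vs * (2 * num_edges adj)"
    using hm_block[OF v Cons.prems(2)] Cons.IH[OF _ h'] Cons.prems(1) by (intro add_mono) auto
  finally show ?case by simp
qed

lemma loop_inv:
  "dfs_loop adj fr st = (fr', tr) \<Longrightarrow>
   \<exists>vs. tr = concat (map (ext_cells adj) vs) \<and> set vs \<subseteq> {..<length fr} \<and>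
        length vs + free_count fr' \<le> free_count fr \<and> length fr' = length fr"
proof (induction adj fr st arbitrary: fr' tr rule: dfs_loop.induct)
  case (1 adj fr)
  then show ?case by (intro exI[of _ "[]"]) auto
next
  case (2 adj fr v st)
  show ?case
  proof (cases "v < length fr \<and> fr ! v")
    case True
    define fr1 where "fr1 = fr[v := False]"
    define ws where "ws = filter (\<lambda>w. w < length fr1 \<and> fr1 ! w) (adj ! v)"
    obtain fr2 tr2 where r: "dfs_loop adj fr1 (rev ws @ st) = (fr2, tr2)" by fastforce
    have eq: "fr' = fr2" "tr = ext_cells adj v @ tr2"
      using "2.prems" True r by (simp_all add: fr1_def ws_def Let_def)
    obtain vs where vs: "tr2 = concat (map (ext_cells adj) vs)" "set vs \<subseteq> {..<length fr1}"
      "length vs + free_count fr2 \<le> free_count fr1" "length fr2 = length fr1"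
      using "2.IH"(1)[OF True fr1_def ws_def] r by blast
    have "free_count fr1 < free_count fr" unfolding fr1_def
      using True by (intro free_count_update_less) auto
    then show ?thesis using vs eq True
      by (intro exI[of _ "v # vs"]) (auto simp: fr1_def)
  next
    case False
    then have "dfs_loop adj fr st = (fr', tr)" using "2.prems" by (simp only: dfs_loop.simps(2) if_not_P[OF False] if_False)
    then show ?thesis using "2.IH"(2)[OF False] by blast
  qed
qed

lemma fold_inv:
  assumes "\<exists>vs. snd s = concat (map (ext_cells adj) vs) \<and> set vs \<subseteq> {..<length adj} \<and>
        length vs + free_count (fst s) \<le> length adj \<and> length (fst s) = length adj"
  shows "\<exists>vs. snd (foldl (\<lambda>(fr, tr) u. let (fr', tr') = dfs_loop adj fr [u] in (fr', tr @ tr')) s us)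
          = concat (map (ext_cells adj) vs) \<and> set vs \<subseteq> {..<length adj} \<and>
        length vs + free_count (fst (foldl (\<lambda>(fr, tr) u. let (fr', tr') = dfs_loop adj fr [u] in (fr', tr @ tr')) s us)) \<le> length adj
        \<and> length (fst (foldl (\<lambda>(fr, tr) u. let (fr', tr') = dfs_loop adj fr [u] in (fr', tr @ tr')) s us)) = length adj"
  using assms
proof (induction us arbitrary: s)
  case Nil
  then show ?case by simp
next
  case (Cons u us)
  obtain fr tr where s: "s = (fr, tr)" by fastforce
  obtain fr' tr' where r: "dfs_loop adj fr [u] = (fr', tr')" by fastforce
  obtain vs where vs: "tr = concat (map (ext_cells adj) vs)" "set vs \<subseteq> {..<length adj}"
    "length vs + free_count fr \<le> length adj" "length fr = length adj"
    using Cons.prems s by auto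
  obtain ws where ws: "tr' = concat (map (ext_cells adj) ws)" "set ws \<subseteq> {..<length fr}"
    "length ws + free_count fr' \<le> free_count fr" "length fr' = length fr"
    using loop_inv[OF r] by blast
  have "\<exists>vs. snd (fr', tr @ tr') = concat (map (ext_cells adj) vs) \<and> set vs \<subseteq> {..<length adj} \<and>
        length vs + free_count (fst (fr', tr @ tr')) \<le> length adj \<and> length (fst (fr', tr @ tr')) = length adj"
    using vs ws by (intro exI[of _ "vs @ ws"]) auto
  from Cons.IH[OF this] show ?case using s r by simp
qed

theorem theorem7:
  shows "\<exists>C::nat. \<forall>adj :: nat list list.
           (\<forall>xs \<in> set adj. distinct xs \<and> (\<forall>w \<in> set xs. w < length adj)) \<longrightarrow>
           ext_access_trace_complexity adj \<le> C * length adj * num_edges adj"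
proof (intro exI[of _ 2] allI impI)
  fix adj :: "nat list list"
  have fc: "free_count (replicate (length adj) True) = length adj"
  proof -
    have "{i. i < length adj \<and> replicate (length adj) True ! i} = {..<length adj}" by auto
    then show ?thesis unfolding free_count_def by simp
  qed
  have "\<exists>vs. snd (replicate (length adj) True, []) = concat (map (ext_cells adj) vs) \<and> set vs \<subseteq> {..<length adj} \<and>
        length vs + free_count (fst (replicate (length adj) True, [] :: nat list)) \<le> length adj \<and>
        length (fst (replicate (length adj) True, [] :: nat list)) = length adj"
    using fc by (intro exI[of _ "[]"]) simp
  from fold_inv[OF this, of "[0..<length adj]"]
  obtain vs where vs: "dfs_trace adj = concat (map (ext_cells adj) vs)"
    "set vs \<subseteq> {..<length adj}" "length vs \<le> length adj"
    unfolding dfs_trace_def by fastforce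
  have "ext_access_trace_complexity adj \<le> length vs * (2 * num_edges adj)"
    unfolding ext_access_trace_complexity_def vs(1)
    using vs(2) by (intro hm_concat) auto
  also have "\<dots> \<le> length adj * (2 * num_edges adj)"
    using vs(3) by (intro mult_right_mono) auto
  finally show "ext_access_trace_complexity adj \<le> 2 * length adj * num_edges adj" by simp
qed

end
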